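(* There exists a complete bifurcate tree of doubly infinite words over an alphabet of size $12$.
   Context: A doubly infinite word over $\mathcal{A}$ is a sequence $(w_k)_{k\in\mathbb{Z}}$ of letters of $\mathcal{A}$. It is square-free if none of its finite contiguous factors is a square, a square being a nonempty word of the form $XX$. A position of a doubly infinite word is a gap between two consecutive letters $w_k,w_{k+1}$; an extension at that position is the doubly infinite word obtained by inserting a single letter $\mathtt{x}\in\mathcal{A}$ between $w_k$ and $w_{k+1}$. A square-free doubly infinite word is bifurcate over $\mathcal{A}$ if at every position it has a square-free extension. A complete bifurcate tree of doubly infinite words is a family of bifurcate doubly infinite words arranged as a rooted tree in which the children of each word are single-letter extensions at pairwise different positions, and every word has a child extended at each of its positions. *)

theory Defs
  imports Main
begin

definition word_over :: "'a set \<Rightarrow> (int \<Rightarrow> 'a) \<Rightarrow> bool" where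
  "word_over A w \<longleftrightarrow> (\<forall>k. w k \<in> A)"

definition square_free :: "(int \<Rightarrow> 'a) \<Rightarrow> bool" where
  "square_free w \<longleftrightarrow>
     \<not> (\<exists>i (n::nat). n > 0 \<and> (\<forall>j<n. w (i + int j) = w (i + int n + int j)))"

text \<open>Position k is the gap between w k and w (k+1); insert letter x there.
  The new letter gets index k+1 and the letters to the right are shifted by one.\<close>
definition extend :: "(int \<Rightarrow> 'a) \<Rightarrow> int \<Rightarrow> 'a \<Rightarrow> (int \<Rightarrow> 'a)" where
  "extend w k x = (\<lambda>i. if i \<le> k then w i else if i = k + 1 then x else w (i - 1))"

definition bifurcate :: "'a set \<Rightarrow> (int \<Rightarrow> 'a) \<Rightarrow> bool" where
  "bifurcate A w \<longleftrightarrow> word_over A w \<and> square_free w \<and>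
     (\<forall>k. \<exists>x\<in>A. square_free (extend w k x))"

text \<open>A complete bifurcate tree: nodes are finite lists of positions (the root is []);
  the child of node ps at position p is node (p # ps), which is an extension of the
  word at ps at position p by some letter of A. Thus children are at pairwise
  different positions and every position has a child.\<close>
definition complete_bifurcate_tree :: "'a set \<Rightarrow> (int list \<Rightarrow> (int \<Rightarrow> 'a)) \<Rightarrow> bool" where
  "complete_bifurcate_tree A T \<longleftrightarrow>
     (\<forall>ps. bifurcate A (T ps)) \<and>
     (\<forall>ps p. \<exists>x\<in>A. T (p # ps) = extend (T ps) p x)"

end

theory Submission
  imports Defs
begin

fun tm :: "nat \<Rightarrow> bool" where
  "tm n = (if n = 0 then False else (if even n then tm (n div 2) else \<not> tm (n div 2)))"

declare tm.simps[simp del]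

lemma tm0[simp]: "tm 0 = False" by (simp add: tm.simps)
lemma tm_even[simp]: "tm (2*n) = tm n"
  by (cases "n = 0") (auto simp: tm.simps[of "2*n"])
lemma tm_odd[simp]: "tm (Suc (2*n)) = (\<not> tm n)"
  by (simp add: tm.simps[of "Suc (2*n)"])

lemma tm_even': "m = 2*n \<Longrightarrow> tm m = tm n" by simp
lemma tm_odd': "m = Suc (2*n) \<Longrightarrow> tm m = (\<not> tm n)" by simp

lemma tm_pair: "tm (2*i) \<noteq> tm (Suc (2*i))" by simp

lemma tm_split: "r < 2^L \<Longrightarrow> tm (2^L * a + r) = (tm a \<noteq> tm r)"
proof (induction L arbitrary: r)
  case 0 then show ?case by simp
next
  case (Suc L)
  obtain r' b where r: "r = 2*r' + b" "b < 2"
  proof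
    show "r = 2*(r div 2) + r mod 2" by simp
  qed simp
  have r': "r' < 2^L" using Suc.prems r by auto
  show ?case
  proof (cases "b = 0")
    case True
    have "2 ^ Suc L * a + r = 2 * (2^L*a + r')" using r True by simp
    then have "tm (2 ^ Suc L * a + r) = tm (2^L*a + r')" by (rule tm_even')
    moreover have "tm r = tm r'" using r True by (simp add: tm_even')
    ultimately show ?thesis using Suc.IH[OF r'] by simp
  next
    case False
    then have b: "b = 1" using r by simp
    have "2 ^ Suc L * a + r = Suc (2 * (2^L*a + r'))" using r b by simp
    then have "tm (2 ^ Suc L * a + r) = (\<not> tm (2^L*a + r'))" by (rule tm_odd')
    moreover have "tm r = (\<not> tm r')" using r b by (simp add: tm_odd')
    ultimately show ?thesis using Suc.IH[OF r'] by auto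
  qed
qed

definition overlap :: "(nat \<Rightarrow> bool) \<Rightarrow> nat \<Rightarrow> nat \<Rightarrow> bool" where
  "overlap f p q \<longleftrightarrow> q > 0 \<and> (\<forall>j\<le>q. f (p+j) = f (p+q+j))"

lemma tm_nocube: "\<not> (tm m = tm (m+1) \<and> tm (m+1) = tm (m+2))"
proof -
  obtain a where "m = 2*a \<or> m = Suc (2*a)"
  proof
    show "m = 2*(m div 2) \<or> m = Suc (2*(m div 2))" by presburger
  qed
  then show ?thesis
  proof
    assume m: "m = 2*a"
    have "tm m = tm a" by (rule tm_even') (use m in simp)
    moreover have "tm (m+1) = (\<not> tm a)" by (rule tm_odd') (use m in simp)
    ultimately show ?thesis by auto
  next
    assume m: "m = Suc (2*a)"
    have "tm (m+1) = tm (a+1)" by (rule tm_even') (use m in simp)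
    moreover have "tm (m+2) = (\<not> tm (a+1))" by (rule tm_odd') (use m in simp)
    ultimately show ?thesis by auto
  qed
qed

lemma tm_alt_even: "even x \<Longrightarrow> tm x \<noteq> tm (x+1)"
proof -
  assume "even x"
  then have "x = 2*(x div 2)" by simp
  then have "x + 1 = Suc (2*(x div 2))" by simp
  then show ?thesis using \<open>x = 2*(x div 2)\<close> tm_pair[of "x div 2"] by simp
qed

theorem tm_overlap_free: "\<not> overlap tm p q"
proof (induction q arbitrary: p rule: less_induct)
  case (less q)
  show ?case
  proof
    assume ov: "overlap tm p q"
    then have q0: "q > 0" and eq: "\<And>j. j \<le> q \<Longrightarrow> tm (p+j) = tm (p+q+j)"
      unfolding overlap_def by auto
    show False
    proof (cases "even q")
      case True
      then obtain r where qr: "q = 2*r" by (auto elim: evenE)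
      have r0: "r > 0" "r < q" using q0 qr by auto
      show False
      proof (cases "even p")
        case True
        then obtain a where pa: "p = 2*a" by (auto elim: evenE)
        have "overlap tm a r"
          unfolding overlap_def
        proof (intro conjI allI impI)
          show "r > 0" using r0 by simp
          fix i assume "i \<le> r"
          then have "tm (p + 2*i) = tm (p + q + 2*i)" using eq[of "2*i"] qr by simp
          moreover have "tm (p + 2*i) = tm (a+i)" by (rule tm_even') (use pa in simp)
          moreover have "tm (p+q+2*i) = tm (a+r+i)" by (rule tm_even') (use pa qr in simp)
          ultimately show "tm (a+i) = tm (a+r+i)" by simp
        qed
        then show False using less.IH[OF r0(2)] by blast
      next
        case False
        then obtain a where pa: "p = Suc (2*a)" by (auto elim: oddE)
        have e0: "tm (2*a) = tm (2*a + q)"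
        proof -
          have "tm p = tm (p+q)" using eq[of 0] by simp
          moreover have "tm (p + q) = (\<not> tm (a+r))" by (rule tm_odd') (use pa qr in simp)
          moreover have "tm p = (\<not> tm a)" by (rule tm_odd') (use pa in simp)
          ultimately have "tm a = tm (a+r)" by simp
          moreover have "tm (2*a) = tm a" by simp
          moreover have "tm (2*a+q) = tm (a+r)" by (rule tm_even') (use qr in simp)
          ultimately show ?thesis by simp
        qed
        have "overlap tm a r"
          unfolding overlap_def
        proof (intro conjI allI impI)
          show "r > 0" using r0 by simp
          fix i assume i: "i \<le> r"
          show "tm (a+i) = tm (a+r+i)"
          proof (cases "i = 0")
            case True
            have "tm (2*a+q) = tm (a+r)" by (rule tm_even') (use qr in simp)
            then show ?thesis using e0 True by simp
          next
            case False
            have j: "2*i - 1 \<le> q" using i qr by simp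
            have "tm (p + (2*i-1)) = tm (p+q+(2*i-1))" using eq[OF j] by simp
            moreover have "tm (p + (2*i-1)) = tm (a+i)" by (rule tm_even') (use pa False in simp)
            moreover have "tm (p+q+(2*i-1)) = tm (a+r+i)" by (rule tm_even') (use pa qr False in simp)
            ultimately show ?thesis by simp
          qed
        qed
        then show False using less.IH[OF r0(2)] by blast
      qed
    next
      case False
      show False
      proof (cases "q = 1")
        case True
        then show False using eq[of 0] eq[of 1] tm_nocube[of p] by (simp add: add.commute)
      next
        case False
        have q3: "q \<ge> 3" using \<open>odd q\<close> q0 False by presburger
        have alt: "\<And>y. p \<le> y \<Longrightarrow> y < p + 2*q \<Longrightarrow> tm y \<noteq> tm (y+1)"
        proof -
          fix y assume y: "p \<le> y" "y < p + 2*q"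
          show "tm y \<noteq> tm (y+1)"
          proof (cases "even y")
            case True then show ?thesis by (rule tm_alt_even)
          next
            case odd: False
            show ?thesis
            proof (cases "y < p + q")
              case True
              have ev: "even (y+q)" using odd \<open>odd q\<close> by simp
              have "tm (y+q) \<noteq> tm (y+q+1)" by (rule tm_alt_even[OF ev])
              moreover have "tm y = tm (y+q)" using eq[of "y-p"] y True by (simp add: add.commute)
              moreover have "tm (y+1) = tm (y+q+1)" using eq[of "y+1-p"] y True by (simp add: add.commute add.left_commute)
              ultimately show ?thesis by simp
            next
              case False
              have qy: "q \<le> y" using False by simp
              have ev: "even (y-q)" using odd \<open>odd q\<close> qy by presburger
              have "tm (y-q) \<noteq> tm (y-q+1)" by (rule tm_alt_even[OF ev])
              moreover have "tm (y-q) = tm y" using eq[of "y-q-p"] y False by simp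
              moreover have "tm (y-q+1) = tm (y+1)"
              proof -
                have "y-q+1-p \<le> q" using y by simp
                from eq[OF this] have "tm (p + (y-q+1-p)) = tm (p+q+(y-q+1-p))" .
                moreover have "p + (y-q+1-p) = y-q+1" "p+q+(y-q+1-p) = y+1" using y False by auto
                ultimately show ?thesis by simp
              qed
              ultimately show ?thesis by simp
            qed
          qed
        qed
        have "overlap tm p 2"
          unfolding overlap_def
        proof (intro conjI allI impI)
          fix j :: nat assume "j \<le> 2"
          have a1: "tm (p+j) \<noteq> tm (p+j+1)" using alt[of "p+j"] q3 \<open>j \<le> 2\<close> by simp
          have a2: "tm (p+j+1) \<noteq> tm (p+j+2)" using alt[of "p+j+1"] q3 \<open>j \<le> 2\<close> by simp
          show "tm (p+j) = tm (p+2+j)" using a1 a2 by (simp add: add.commute add.left_commute)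
        qed simp
        then show False using less.IH[of 2] q3 by auto
      qed
    qed
  qed
qed

lemma tm1[simp]: "tm 1 = True"
proof -
  have "tm (Suc (2*0)) = (\<not> tm 0)" by (rule tm_odd)
  then show ?thesis by (simp add: One_nat_def)
qed
lemma tm1'[simp]: "tm (Suc 0) = True" using tm1 by (simp add: One_nat_def)
lemma tm2[simp]: "tm 2 = True"
proof -
  have "tm (2*1) = tm 1" by (rule tm_even)
  then show ?thesis by simp
qed
lemma tm3[simp]: "tm 3 = False"
proof -
  have "tm (Suc (2*1)) = (\<not> tm 1)" by (rule tm_odd)
  then show ?thesis by (simp add: numeral_3_eq_3)
qed

lemma tm4: "tm (4*m + j) = (tm (m + j div 4) \<noteq> tm (j mod 4))"
proof -
  have e: "4*m + j = 2^2 * (m + j div 4) + j mod 4" by simp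
  have "j mod 4 < 2^2" by simp
  from tm_split[OF this, of "m + j div 4"] show ?thesis by (simp only: e)
qed

definition T4' :: "bool \<Rightarrow> bool \<Rightarrow> bool \<Rightarrow> bool \<times> bool" where
  "T4' a b d = (if a = d \<and> a \<noteq> b then (True, a) else (False, b))"

definition T4 :: "nat \<Rightarrow> bool \<times> bool" where
  "T4 n = T4' (tm n) (tm (n+1)) (tm (n+3))"

definition bt :: "nat \<Rightarrow> bool \<Rightarrow> bool \<Rightarrow> bool \<Rightarrow> nat \<Rightarrow> bool" where
  "bt r a b c j = ((if (r+j) div 4 = 0 then a else if (r+j) div 4 = 1 then b else c) \<noteq> ((r+j) mod 4 = 1 \<or> (r+j) mod 4 = 2))"

definition good :: "(nat \<Rightarrow> bool) \<Rightarrow> (nat \<Rightarrow> bool) \<Rightarrow> bool" where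
  "good x y \<longleftrightarrow> (T4' (x 0) (x 1) (x 3) = T4' (y 0) (y 1) (y 3) \<and> T4' (x 1) (x 2) (x 4) = T4' (y 1) (y 2) (y 4)
     \<and> T4' (x 2) (x 3) (x 5) = T4' (y 2) (y 3) (y 5)) \<longrightarrow> (x 0 = y 0 \<and> x 1 = y 1 \<and> x 2 = y 2 \<and> x 3 = y 3)"

definition palg :: "(nat \<Rightarrow> bool) \<Rightarrow> bool" where
  "palg x \<longleftrightarrow> T4' (x 0) (x 1) (x 3) \<noteq> T4' (x 1) (x 2) (x 4) \<and> T4' (x 0) (x 1) (x 3) \<noteq> T4' (x 2) (x 3) (x 5)"

lemma det_all: "\<forall>r\<in>{0,1,2,3::nat}. \<forall>r'\<in>{0,1,2,3::nat}. \<forall>a b c a' b' c'. \<not>(a=b\<and>b=c) \<longrightarrow> \<not>(a'=b'\<and>b'=c') \<longrightarrow> good (bt r a b c) (bt r' a' b' c')"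
  by (simp add: all_bool_eq good_def T4'_def bt_def)

lemma pal_all: "\<forall>r\<in>{0,1,2,3::nat}. \<forall>a b c. \<not>(a=b\<and>b=c) \<longrightarrow> palg (bt r a b c)"
  by (simp add: all_bool_eq palg_def T4'_def bt_def)

lemma tm_small: "k < 4 \<Longrightarrow> tm k = (k = 1 \<or> k = 2)"
proof -
  assume "k < 4" then have "k = 0 \<or> k = 1 \<or> k = 2 \<or> k = 3" by auto
  then show ?thesis by auto
qed

lemma decomp4: fixes n :: nat obtains m r where "n = 4*m + r" "r < 4"
proof
  show "n = 4*(n div 4) + n mod 4" by simp
qed simp

lemma win: assumes "n = 4*m + r" "r < 4" "j < 6"
  shows "tm (n+j) = bt r (tm m) (tm (m+1)) (tm (m+2)) j"
proof -
  have t: "tm (n+j) = (tm (m + (r+j) div 4) \<noteq> tm ((r+j) mod 4))"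
    using tm4[of m "r+j"] assms(1) by (simp add: add.assoc)
  have "(r+j) div 4 \<le> 2" using assms by simp
  then have d: "(r+j) div 4 = 0 \<or> (r+j) div 4 = 1 \<or> (r+j) div 4 = 2" by auto
  have "tm ((r+j) mod 4) = ((r+j) mod 4 = 1 \<or> (r+j) mod 4 = 2)" by (rule tm_small) simp
  then show ?thesis unfolding t bt_def using d by auto
qed

lemma nc: "\<not> (tm m = tm (m+1) \<and> tm (m+1) = tm (m+2))" by (rule tm_nocube)

lemma T4_shift: "T4 (n+1) = T4' (tm (n+1)) (tm (n+2)) (tm (n+4))"
                "T4 (n+2) = T4' (tm (n+2)) (tm (n+3)) (tm (n+5))"
proof -
  have "n+1+1 = n+2" "n+1+3 = n+4" "n+2+1 = n+3" "n+2+3 = n+5" by simp_all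
  then show "T4 (n+1) = T4' (tm (n+1)) (tm (n+2)) (tm (n+4))"
            "T4 (n+2) = T4' (tm (n+2)) (tm (n+3)) (tm (n+5))" unfolding T4_def by (simp_all only:)
qed

lemma winl: assumes "n = 4*m + r" "r < 4"
  shows "tm n = bt r (tm m) (tm (m+1)) (tm (m+2)) 0"
    "tm (n+1) = bt r (tm m) (tm (m+1)) (tm (m+2)) 1"
    "tm (n+2) = bt r (tm m) (tm (m+1)) (tm (m+2)) 2"
    "tm (n+3) = bt r (tm m) (tm (m+1)) (tm (m+2)) 3"
    "tm (n+4) = bt r (tm m) (tm (m+1)) (tm (m+2)) 4"
    "tm (n+5) = bt r (tm m) (tm (m+1)) (tm (m+2)) 5"
  using win[OF assms, of 0] win[OF assms, of 1] win[OF assms, of 2] win[OF assms, of 3]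
    win[OF assms, of 4] win[OF assms, of 5] by simp_all

lemma T4_pal: "T4 n \<noteq> T4 (n+1) \<and> T4 n \<noteq> T4 (n+2)"
proof -
  obtain m r where d: "n = 4*m + r" "r < 4" by (rule decomp4)
  have "r \<in> {0,1,2,3}" using d by auto
  from pal_all[rule_format, OF this nc[of m]]
  have "palg (bt r (tm m) (tm (m+1)) (tm (m+2)))" .
  then show ?thesis unfolding T4_shift unfolding T4_def palg_def winl[OF d] .
qed

lemma T4_det: assumes "T4 n = T4 n'" "T4 (n+1) = T4 (n'+1)" "T4 (n+2) = T4 (n'+2)"
  shows "tm n = tm n' \<and> tm (n+1) = tm (n'+1) \<and> tm (n+2) = tm (n'+2) \<and> tm (n+3) = tm (n'+3)"
proof -
  obtain m r where d: "n = 4*m + r" "r < 4" by (rule decomp4)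
  obtain m' r' where d': "n' = 4*m' + r'" "r' < 4" by (rule decomp4)
  have "r \<in> {0,1,2,3}" "r' \<in> {0,1,2,3}" using d d' by auto
  from det_all[rule_format, OF this nc[of m] nc[of m']]
  have g: "good (bt r (tm m) (tm (m+1)) (tm (m+2))) (bt r' (tm m') (tm (m'+1)) (tm (m'+2)))" .
  have h: "T4' (bt r (tm m) (tm (m+1)) (tm (m+2)) 0) (bt r (tm m) (tm (m+1)) (tm (m+2)) 1) (bt r (tm m) (tm (m+1)) (tm (m+2)) 3)
         = T4' (bt r' (tm m') (tm (m'+1)) (tm (m'+2)) 0) (bt r' (tm m') (tm (m'+1)) (tm (m'+2)) 1) (bt r' (tm m') (tm (m'+1)) (tm (m'+2)) 3)"
    "T4' (bt r (tm m) (tm (m+1)) (tm (m+2)) 1) (bt r (tm m) (tm (m+1)) (tm (m+2)) 2) (bt r (tm m) (tm (m+1)) (tm (m+2)) 4)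
         = T4' (bt r' (tm m') (tm (m'+1)) (tm (m'+2)) 1) (bt r' (tm m') (tm (m'+1)) (tm (m'+2)) 2) (bt r' (tm m') (tm (m'+1)) (tm (m'+2)) 4)"
    "T4' (bt r (tm m) (tm (m+1)) (tm (m+2)) 2) (bt r (tm m) (tm (m+1)) (tm (m+2)) 3) (bt r (tm m) (tm (m+1)) (tm (m+2)) 5)
         = T4' (bt r' (tm m') (tm (m'+1)) (tm (m'+2)) 2) (bt r' (tm m') (tm (m'+1)) (tm (m'+2)) 3) (bt r' (tm m') (tm (m'+1)) (tm (m'+2)) 5)"
    using assms unfolding T4_shift unfolding T4_def winl[OF d] winl[OF d'] by simp_all
  have "bt r (tm m) (tm (m+1)) (tm (m+2)) 0 = bt r' (tm m') (tm (m'+1)) (tm (m'+2)) 0 \<and>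
        bt r (tm m) (tm (m+1)) (tm (m+2)) 1 = bt r' (tm m') (tm (m'+1)) (tm (m'+2)) 1 \<and>
        bt r (tm m) (tm (m+1)) (tm (m+2)) 2 = bt r' (tm m') (tm (m'+1)) (tm (m'+2)) 2 \<and>
        bt r (tm m) (tm (m+1)) (tm (m+2)) 3 = bt r' (tm m') (tm (m'+1)) (tm (m'+2)) 3"
    using g h unfolding good_def by blast
  then show ?thesis unfolding winl[OF d, symmetric] winl[OF d', symmetric] .
qed

lemma T4_sqfree: "\<not> (q > 0 \<and> (\<forall>j<q. T4 (a+j) = T4 (a+q+j)))"
proof
  assume h: "q > 0 \<and> (\<forall>j<q. T4 (a+j) = T4 (a+q+j))"
  then have q0: "q > 0" and eq: "\<And>j. j < q \<Longrightarrow> T4 (a+j) = T4 (a+q+j)" by auto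
  show False
  proof (cases "q \<le> 2")
    case True
    then have "q = 1 \<or> q = 2" using q0 by auto
    then show False
    proof
      assume "q = 1" then show False using eq[of 0] T4_pal[of a] by simp
    next
      assume "q = 2" then show False using eq[of 0] eq[of 1] T4_pal[of a] T4_pal[of "a+1"]
        by (simp add: add.assoc)
    qed
  next
    case False
    have "overlap tm a q"
      unfolding overlap_def
    proof (intro conjI allI impI)
      show "q > 0" by (rule q0)
      fix j assume j: "j \<le> q"
      define k where "k = min j (q - 3)"
      define i where "i = j - k"
      have ki: "k + 3 \<le> q" "i \<le> 3" "j = k + i" using False j unfolding k_def i_def by auto
      have "T4 (a+k) = T4 (a+q+k)" "T4 (a+k+1) = T4 (a+q+k+1)" "T4 (a+k+2) = T4 (a+q+k+2)"
        using eq[of k] eq[of "k+1"] eq[of "k+2"] ki by (simp_all add: add.assoc)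
      from T4_det[OF this] have
        "tm (a+k) = tm (a+q+k) \<and> tm (a+k+1) = tm (a+q+k+1) \<and> tm (a+k+2) = tm (a+q+k+2) \<and> tm (a+k+3) = tm (a+q+k+3)" .
      moreover have "i = 0 \<or> i = 1 \<or> i = 2 \<or> i = 3" using ki by auto
      ultimately show "tm (a+j) = tm (a+q+j)" using ki by (auto simp: add.assoc)
    qed
    then show False using tm_overlap_free by blast
  qed
qed

lemma T4_near: assumes "T4 a = T4 b" "b \<le> a + 2" "a \<le> b + 2" shows "a = b"
proof -
  { fix x y assume "x < y" "y \<le> x + 2" "T4 x = T4 y"
    then have "y = x + 1 \<or> y = x + 2" by auto
    then have False using T4_pal[of x] \<open>T4 x = T4 y\<close> by auto }
  note * = this
  show ?thesis
  proof (rule ccontr)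
    assume "a \<noteq> b"
    then have "a < b \<or> b < a" by auto
    then show False
    proof
      assume "a < b" then show False using *[of a b] assms by simp
    next
      assume "b < a" then show False using *[of b a] assms by simp
    qed
  qed
qed

lemma tm_small4: "tm 0 = False" "tm 1 = True" "tm 2 = True" "tm 3 = False"
proof -
  show "tm 0 = False" by simp
  have a: "tm (Suc (2*0)) = (\<not> tm 0)" by (rule tm_odd)
  then show "tm 1 = True" by (simp add: One_nat_def)
  have "tm (2*1) = tm 1" by (rule tm_even)
  then show "tm 2 = True" using a by (simp add: One_nat_def)
  have "tm (Suc (2*1)) = (\<not> tm 1)" by (rule tm_odd)
  then show "tm 3 = False" using a by (simp add: numeral_3_eq_3 One_nat_def)
qed

lemma tm12: "tm 12 = False"
proof -
  have "tm (2*6) = tm 6" by (rule tm_even)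
  moreover have "tm (2*3) = tm 3" by (rule tm_even)
  ultimately show ?thesis using tm_small4 by simp
qed

lemma tm11: "tm 11 = True"
proof -
  have "tm (Suc (2*5)) = (\<not> tm 5)" by (rule tm_odd)
  moreover have "tm (Suc (2*2)) = (\<not> tm 2)" by (rule tm_odd)
  ultimately show ?thesis using tm_small4 by simp
qed

lemma pow4: "(4::nat)^K = 2^(2*K)" by (simp add: power_mult)

lemma xcons: assumes "-(4^K) \<le> i" "i < 4^K"
  shows "tm (nat (3*4^K + i)) = tm (nat (3*4^(Suc K) + i))"
proof (cases "i \<ge> 0")
  case True
  define r where "r = nat i"
  have "i < int (4^K)" using assms by simp
  then have "r < 4^K" unfolding r_def using True by linarith
  then have r: "r < 2^(2*K)" unfolding pow4 .
  have e1: "nat (3*4^K + i) = 2^(2*K) * 3 + r" using True unfolding r_def pow4[symmetric]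
    by (simp add: nat_add_distrib nat_mult_distrib nat_power_eq)
  have e2: "nat (3*4^(Suc K) + i) = 2^(2*K) * 12 + r" using True unfolding r_def pow4[symmetric]
    by (simp add: nat_add_distrib nat_mult_distrib nat_power_eq)
  show ?thesis unfolding e1 e2 using tm_split[OF r, of 3] tm_split[OF r, of 12] tm12 tm_small4 by simp
next
  case False
  define r where "r = nat (4^K + i)"
  have "i < 0" using False by simp
  then have "4^K + i < int (4^K)" by simp
  then have "r < 4^K" unfolding r_def using assms by linarith
  then have r: "r < 2^(2*K)" unfolding pow4 .
  have ri: "int r = 4^K + i" using assms unfolding r_def by simp
  have e1: "nat (3*4^K + i) = 2^(2*K) * 2 + r"
  proof -
    have "int (2^(2*K) * 2 + r) = 3*4^K + i" using ri unfolding pow4[symmetric] by simp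
    then show ?thesis by linarith
  qed
  have e2: "nat (3*4^(Suc K) + i) = 2^(2*K) * 11 + r"
  proof -
    have "int (2^(2*K) * 11 + r) = 3*4^(Suc K) + i" using ri unfolding pow4[symmetric] by simp
    then show ?thesis by linarith
  qed
  show ?thesis unfolding e1 e2 using tm_split[OF r, of 2] tm_split[OF r, of 11] tm11 tm_small4 by simp
qed

lemma xcons2: assumes "-(4^K) \<le> i" "i < 4^K" "K \<le> K'"
  shows "tm (nat (3*4^K + i)) = tm (nat (3*4^K' + i))"
  using assms(3)
proof (induction K' rule: dec_induct)
  case base then show ?case by simp
next
  case (step K')
  have "(4::int)^K \<le> 4^K'" using step(1) by (simp add: power_increasing)
  then have "-(4^K') \<le> i" "i < 4^K'" using assms by linarith+
  then show ?case using step xcons[of K' i] by simp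
qed

definition xx :: "int \<Rightarrow> bool" where
  "xx i = tm (nat (3*4^(nat \<bar>i\<bar>) + i))"

lemma pow4_gt_nat: "k < (4::nat)^k"
proof (induction k)
  case 0 then show ?case by simp
next
  case (Suc k)
  have "(1::nat) \<le> 4^k" by simp
  then show ?case using Suc by simp
qed

lemma pow4_gt: "int k < 4^k"
proof -
  have "int k < int (4^k)" using pow4_gt_nat[of k] by (simp only: of_nat_less_iff)
  then show ?thesis by simp
qed

lemma xx_win: assumes "-(4^K) \<le> i" "i < 4^K"
  shows "xx i = tm (nat (3*4^K + i))"
proof -
  define K0 where "K0 = nat \<bar>i\<bar>"
  have r0: "-(4^K0) \<le> i" "i < 4^K0" using pow4_gt[of K0] unfolding K0_def by auto
  show ?thesis
  proof (cases "K0 \<le> K")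
    case True then show ?thesis unfolding xx_def K0_def[symmetric] using xcons2[OF r0 True] by simp
  next
    case False then show ?thesis unfolding xx_def K0_def[symmetric] using xcons2[OF assms, of K0] by simp
  qed
qed

definition D :: "int \<Rightarrow> int" where
  "D i = of_bool (xx (i+1)) - of_bool (xx i)"

lemma xx_overlap_free: assumes "s > 0" "\<forall>j\<le>s. xx (a + int j) = xx (a + int s + int j)"
  shows False
proof -
  define K where "K = nat \<bar>a\<bar> + 2*s"
  have big: "int K < 4^K" by (rule pow4_gt)
  have rng: "\<And>j. j \<le> 2*s \<Longrightarrow> -(4^K) \<le> a + int j \<and> a + int j < 4^K"
    using big unfolding K_def by auto
  define p where "p = nat (3*4^K + a)"
  have pa: "\<And>j. j \<le> 2*s \<Longrightarrow> nat (3*4^K + (a + int j)) = p + j"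
  proof -
    fix j assume "j \<le> 2*s"
    then have "3*4^K + a \<ge> 0" using rng[of 0] by auto
    then show "nat (3*4^K + (a + int j)) = p + j" unfolding p_def by (simp add: add.assoc nat_add_distrib[symmetric])
  qed
  have "overlap tm p s"
    unfolding overlap_def
  proof (intro conjI allI impI)
    show "s > 0" by (rule assms(1))
    fix j assume j: "j \<le> s"
    have "xx (a + int j) = xx (a + int s + int j)" using assms(2) j by simp
    moreover have "xx (a + int j) = tm (p + j)" using xx_win[of K "a + int j"] rng[of j] pa[of j] j by simp
    moreover have "xx (a + int s + int j) = tm (p + s + j)"
      using xx_win[of K "a + int (s+j)"] rng[of "s+j"] pa[of "s+j"] j by (simp add: add.assoc)
    ultimately show "tm (p+j) = tm (p+s+j)" by simp
  qed
  then show False using tm_overlap_free by blast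
qed

lemma D_sqfree: "\<not> (s > 0 \<and> (\<forall>j<s. D (a + int j) = D (a + int s + int j)))"
proof
  assume h: "s > 0 \<and> (\<forall>j<s. D (a + int j) = D (a + int s + int j))"
  define e where "e j = of_bool (xx (a + int s + int j)) - (of_bool (xx (a + int j)) :: int)" for j
  have ec: "\<And>j. j \<le> s \<Longrightarrow> e j = e 0"
  proof -
    fix j show "j \<le> s \<Longrightarrow> e j = e 0"
    proof (induction j)
      case 0 then show ?case by simp
    next
      case (Suc j)
      then have "D (a + int j) = D (a + int s + int j)" using h by simp
      moreover have "e (Suc j) - e j = D (a + int s + int j) - D (a + int j)"
        unfolding e_def D_def by (simp add: algebra_simps)
      ultimately have "e (Suc j) = e j" by simp
      then show ?case using Suc by simp
    qed
  qed
  show False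
  proof (cases "e 0 = 0")
    case True
    have all: "\<forall>j\<le>s. xx (a + int j) = xx (a + int s + int j)"
    proof (intro allI impI)
      fix j assume "j \<le> s" then have "e j = e 0" by (rule ec)
      then have "e j = 0" using True by simp
      then show "xx (a + int j) = xx (a + int s + int j)" unfolding e_def by (auto simp: of_bool_def split: if_splits)
    qed
    have s0: "s > 0" using h by simp
    from xx_overlap_free[OF s0 all] show False .
  next
    case False
    have "e s = e 0" by (rule ec) simp
    moreover have "e 0 = of_bool (xx (a + int s)) - of_bool (xx a)" unfolding e_def by simp
    moreover have "e s = of_bool (xx (a + int s + int s)) - of_bool (xx (a + int s))" unfolding e_def by simp
    ultimately show False using False by (cases "xx a"; cases "xx (a + int s)"; cases "xx (a + int s + int s)") simp_all
  qed
qed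

lemma D_range: "D i \<in> {-1, 0, 1}" unfolding D_def by (auto simp: of_bool_def)

datatype vtx = Root int | Ear vtx vtx

fun lvl :: "vtx \<Rightarrow> nat" where
  "lvl (Root i) = 0"
| "lvl (Ear a b) = min (lvl a) (lvl b) + 1"

fun idx :: "vtx \<Rightarrow> int" where
  "idx (Root i) = i"
| "idx (Ear a b) = (if lvl a = lvl b then 0 else if lvl a < lvl b then idx b - 1 else idx a + 1)"

definition goodw :: "(int \<Rightarrow> vtx) \<Rightarrow> bool" where
  "goodw w \<longleftrightarrow> (\<forall>i. lvl (w (i+1)) \<le> lvl (w i) + 1 \<and> lvl (w i) \<le> lvl (w (i+1)) + 1) \<and>
     (\<forall>i j. i < j \<and> lvl (w i) = lvl (w j) \<and> (\<forall>k. i < k \<and> k < j \<longrightarrow> lvl (w i) < lvl (w k))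
        \<longrightarrow> idx (w j) = idx (w i) + 1)"

lemma good_root: "goodw Root"
  unfolding goodw_def
proof (intro conjI allI impI)
  fix i j :: int
  assume h: "i < j \<and> lvl (Root i) = lvl (Root j) \<and> (\<forall>k. i < k \<and> k < j \<longrightarrow> lvl (Root i) < lvl (Root k))"
  have "j = i + 1"
  proof (rule ccontr)
    assume "j \<noteq> i + 1"
    moreover have "i < j" using h by simp
    ultimately have k: "i < i + 1 \<and> i + 1 < j" by linarith
    have "\<forall>k. i < k \<and> k < j \<longrightarrow> False" using h by simp
    then show False using k by blast
  qed
  then show "idx (Root j) = idx (Root i) + 1" by simp
qed simp_all

lemma ext_lo: "i \<le> p \<Longrightarrow> extend w p x i = w i" unfolding extend_def by simp
lemma ext_mid: "extend w p x (p+1) = x" unfolding extend_def by simp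
lemma ext_hi: "p + 1 < i \<Longrightarrow> extend w p x i = w (i - 1)" unfolding extend_def by simp

lemma good_ext:
  assumes g: "goodw w"
  shows "goodw (extend w p (Ear (w p) (w (p+1))))"
proof -
  define a where "a = w p"
  define b where "b = w (p+1)"
  define v where "v = Ear a b"
  define w' where "w' = extend w p v"
  have G1: "\<And>i. lvl (w (i+1)) \<le> lvl (w i) + 1 \<and> lvl (w i) \<le> lvl (w (i+1)) + 1" using g unfolding goodw_def by blast
  have G2: "\<And>i j. i < j \<Longrightarrow> lvl (w i) = lvl (w j) \<Longrightarrow> (\<forall>k. i < k \<and> k < j \<longrightarrow> lvl (w i) < lvl (w k))
        \<Longrightarrow> idx (w j) = idx (w i) + 1" using g unfolding goodw_def by blast
  have ab: "lvl b \<le> lvl a + 1" "lvl a \<le> lvl b + 1" using G1[of p] unfolding a_def b_def by auto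
  have lv: "lvl v = min (lvl a) (lvl b) + 1" unfolding v_def by simp
  have wlo: "\<And>i. i \<le> p \<Longrightarrow> w' i = w i" unfolding w'_def by (rule ext_lo)
  have wmid: "w' (p+1) = v" unfolding w'_def by (rule ext_mid)
  have whi: "\<And>i. p + 1 < i \<Longrightarrow> w' i = w (i - 1)" unfolding w'_def by (rule ext_hi)
  have wp: "w' p = a" using wlo[of p] unfolding a_def by simp
  have wp2: "w' (p+2) = b" using whi[of "p+2"] unfolding b_def by (simp add: add.commute)
  have H1: "\<And>i. lvl (w' (i+1)) \<le> lvl (w' i) + 1 \<and> lvl (w' i) \<le> lvl (w' (i+1)) + 1"
  proof -
    fix i :: int
    consider "i + 1 \<le> p" | "i = p" | "i = p + 1" | "p + 1 < i" by linarith
    then show "lvl (w' (i+1)) \<le> lvl (w' i) + 1 \<and> lvl (w' i) \<le> lvl (w' (i+1)) + 1"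
    proof cases
      case 1 then show ?thesis using wlo[of i] wlo[of "i+1"] G1[of i] by simp
    next
      case 2 then show ?thesis using wp wmid lv ab by auto
    next
      case 3 then show ?thesis using wmid wp2 lv ab by (auto simp: add.assoc)
    next
      case 4
      have "w' (i+1) = w i" using whi[of "i+1"] 4 by simp
      moreover have "w' i = w (i - 1)" using whi[of i] 4 by simp
      ultimately show ?thesis using G1[of "i-1"] by simp
    qed
  qed
  have H2: "\<And>i j. i < j \<Longrightarrow> lvl (w' i) = lvl (w' j) \<Longrightarrow> (\<forall>k. i < k \<and> k < j \<longrightarrow> lvl (w' i) < lvl (w' k))
        \<Longrightarrow> idx (w' j) = idx (w' i) + 1"
  proof -
    fix i j :: int
    assume ij: "i < j" and eqv: "lvl (w' i) = lvl (w' j)" and btw: "\<forall>k. i < k \<and> k < j \<longrightarrow> lvl (w' i) < lvl (w' k)"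
    consider "j \<le> p" | "p + 1 < i" | "i \<le> p \<and> p + 1 < j" | "i \<le> p \<and> j = p + 1" | "i = p + 1"
      using ij by linarith
    then show "idx (w' j) = idx (w' i) + 1"
    proof cases
      case 1
      have "idx (w j) = idx (w i) + 1"
      proof (rule G2[OF ij])
        show "lvl (w i) = lvl (w j)" using eqv wlo[of i] wlo[of j] 1 ij by simp
        show "\<forall>k. i < k \<and> k < j \<longrightarrow> lvl (w i) < lvl (w k)"
          using btw wlo 1 ij by (metis less_le_trans order.strict_implies_order)
      qed
      then show ?thesis using wlo[of i] wlo[of j] 1 ij by simp
    next
      case 2
      have "idx (w (j-1)) = idx (w (i-1)) + 1"
      proof (rule G2)
        show "i - 1 < j - 1" using ij by simp
        show "lvl (w (i-1)) = lvl (w (j-1))" using eqv whi[of i] whi[of j] 2 ij by simp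
        show "\<forall>k. i - 1 < k \<and> k < j - 1 \<longrightarrow> lvl (w (i-1)) < lvl (w k)"
        proof (intro allI impI)
          fix k assume k: "i - 1 < k \<and> k < j - 1"
          then have "lvl (w' i) < lvl (w' (k+1))" using btw by auto
          moreover have "w' (k+1) = w k" using whi[of "k+1"] k 2 by simp
          moreover have "w' i = w (i - 1)" using whi[of i] 2 by simp
          ultimately show "lvl (w (i-1)) < lvl (w k)" by simp
        qed
      qed
      then show ?thesis using whi[of i] whi[of j] 2 ij by simp
    next
      case 3
      have "idx (w (j-1)) = idx (w i) + 1"
      proof (rule G2)
        show "i < j - 1" using 3 by simp
        show "lvl (w i) = lvl (w (j-1))" using eqv wlo[of i] whi[of j] 3 by simp
        show "\<forall>k. i < k \<and> k < j - 1 \<longrightarrow> lvl (w i) < lvl (w k)"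
        proof (intro allI impI)
          fix k assume k: "i < k \<and> k < j - 1"
          show "lvl (w i) < lvl (w k)"
          proof (cases "k \<le> p")
            case True
            then have "lvl (w' i) < lvl (w' k)" using btw k 3 by auto
            then show ?thesis using wlo[of i] wlo[of k] True 3 by simp
          next
            case False
            then have "lvl (w' i) < lvl (w' (k+1))" using btw k 3 by auto
            moreover have "w' (k+1) = w k" using whi[of "k+1"] False by simp
            ultimately show ?thesis using wlo[of i] 3 by simp
          qed
        qed
      qed
      then show ?thesis using wlo[of i] whi[of j] 3 by simp
    next
      case 4
      then have jv: "w' j = v" using wmid by simp
      have "i = p"
      proof (rule ccontr)
        assume "i \<noteq> p"
        then have "i < p" using 4 by simp
        then have "lvl (w' i) < lvl (w' p)" using btw 4 by auto
        then have "lvl v < lvl a" using eqv jv wp by simp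
        then show False using lv ab by simp
      qed
      then have "lvl a = lvl v" using eqv jv wp by simp
      then have "lvl b < lvl a" using lv ab by simp
      then have "idx v = idx a + 1" unfolding v_def by simp
      then show ?thesis using jv \<open>i = p\<close> wp by simp
    next
      case 5
      then have iv: "w' i = v" using wmid by simp
      have "j = p + 2"
      proof (rule ccontr)
        assume "j \<noteq> p + 2"
        then have "p + 2 < j" using 5 ij by simp
        then have "lvl (w' i) < lvl (w' (p+2))" using btw 5 by auto
        then have "lvl v < lvl b" using iv wp2 by simp
        then show False using lv ab by simp
      qed
      then have "lvl b = lvl v" using eqv iv wp2 by simp
      then have "lvl a < lvl b" using lv ab by simp
      then have "idx v = idx b - 1" unfolding v_def by simp
      then show ?thesis using iv \<open>j = p + 2\<close> wp2 by simp
    qed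
  qed
  show ?thesis unfolding goodw_def w'_def[symmetric] v_def[symmetric] a_def[symmetric] b_def[symmetric]
    using H1 H2 by blast
qed

primrec W :: "int list \<Rightarrow> int \<Rightarrow> vtx" where
  "W [] = Root"
| "W (p # ps) = extend (W ps) p (Ear (W ps p) (W ps (p+1)))"

lemma good_W: "goodw (W ps)"
  by (induction ps) (simp_all add: good_root good_ext)

lemma ivt:
  fixes Z :: "nat \<Rightarrow> int"
  assumes "\<And>j. j < N \<Longrightarrow> \<bar>Z (Suc j) - Z j\<bar> \<le> 1"
    and "min (Z 0) (Z N) \<le> y" "y \<le> max (Z 0) (Z N)"
  shows "\<exists>j\<le>N. Z j = y"
  using assms
proof (induction N)
  case 0 then show ?case by auto
next
  case (Suc N)
  show ?case
  proof (cases "min (Z 0) (Z N) \<le> y \<and> y \<le> max (Z 0) (Z N)")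
    case True
    then obtain j where "j \<le> N" "Z j = y" using Suc.IH Suc.prems(1) by auto
    then show ?thesis by (intro exI[of _ j]) auto
  next
    case False
    have "\<bar>Z (Suc N) - Z N\<bar> \<le> 1" using Suc.prems(1) by simp
    then have "Z (Suc N) = y" using False Suc.prems(2,3) by auto
    then show ?thesis by (intro exI[of _ "Suc N"]) auto
  qed
qed

lemma walk:
  fixes z :: "nat \<Rightarrow> nat" and n :: nat
  assumes n0: "n > 0"
    and lazy: "\<And>j. Suc j < 2*n \<Longrightarrow> z (Suc j) \<le> z j + 1 \<and> z j \<le> z (Suc j) + 1"
    and col: "\<And>j. j < n \<Longrightarrow> T4 (z j) = T4 (z (j+n))"
  shows "\<forall>j<n. z j = z (j+n)"
proof -
  define Z where "Z j = int (z j)" for j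
  have lz: "\<And>j. Suc j < 2*n \<Longrightarrow> \<bar>Z (Suc j) - Z j\<bar> \<le> 1" using lazy unfolding Z_def by fastforce
  have near: "\<And>a b. T4 (z a) = T4 (z b) \<Longrightarrow> \<bar>Z a - Z b\<bar> \<le> 2 \<Longrightarrow> z a = z b"
  proof -
    fix a b assume "T4 (z a) = T4 (z b)" "\<bar>Z a - Z b\<bar> \<le> 2"
    then show "z a = z b" using T4_near[of "z a" "z b"] unfolding Z_def by linarith
  qed
  have propag: "z 0 = z n \<Longrightarrow> \<forall>j<n. z j = z (j+n)"
  proof -
    assume h0: "z 0 = z n"
    { fix j have "j < n \<Longrightarrow> z j = z (j+n)"
      proof (induction j)
        case 0 then show ?case using h0 by simp
      next
        case (Suc j)
        then have e: "z j = z (j+n)" by simp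
        have "T4 (z (Suc j)) = T4 (z (Suc j + n))" using col Suc.prems by blast
        moreover have "\<bar>Z (Suc j) - Z (Suc j + n)\<bar> \<le> 2"
          using lz[of j] lz[of "j+n"] e Suc.prems unfolding Z_def by auto
        ultimately show ?case using near by blast
      qed }
    then show ?thesis by blast
  qed
  show ?thesis
  proof (cases "z 0 = z n")
    case True then show ?thesis using propag by blast
  next
    case zne: False
    define s where "s j = Z (Suc j) - Z j" for j
    define s' where "s' j = Z (Suc j + n) - Z (j + n)" for j
    have srange: "\<And>j. Suc j < n \<Longrightarrow> s j \<in> {-1,0,1} \<and> s' j \<in> {-1,0,1}"
    proof -
      fix j assume "Suc j < n"
      then have "\<bar>s j\<bar> \<le> 1" "\<bar>s' j\<bar> \<le> 1" using lz[of j] lz[of "j+n"] unfolding s_def s'_def by auto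
      then show "s j \<in> {-1,0,1} \<and> s' j \<in> {-1,0,1}" by auto
    qed
    have sync: "\<And>j. Suc j < n \<Longrightarrow> s j = 0 \<longleftrightarrow> s' j = 0"
    proof -
      fix j assume j: "Suc j < n"
      have c1: "T4 (z j) = T4 (z (j+n))" "T4 (z (Suc j)) = T4 (z (Suc j+n))" using col j by auto
      have l1: "\<bar>Z (Suc j) - Z j\<bar> \<le> 1" "\<bar>Z (Suc j + n) - Z (j+n)\<bar> \<le> 1" using lz[of j] lz[of "j+n"] j by auto
      show "s j = 0 \<longleftrightarrow> s' j = 0"
      proof
        assume "s j = 0"
        then have "z (Suc j) = z j" unfolding s_def Z_def by simp
        then have "T4 (z (Suc j + n)) = T4 (z (j+n))" using c1 by simp
        then have "z (Suc j + n) = z (j+n)" using near l1 by fastforce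
        then show "s' j = 0" unfolding s'_def Z_def by simp
      next
        assume "s' j = 0"
        then have "z (Suc j + n) = z (j + n)" unfolding s'_def Z_def by simp
        then have "T4 (z (Suc j)) = T4 (z j)" using c1 by simp
        then have "z (Suc j) = z j" using near l1 by fastforce
        then show "s j = 0" unfolding s_def Z_def by simp
      qed
    qed
    have flat: "\<And>j k. j < k \<Longrightarrow> Suc k \<le> n \<Longrightarrow> (\<forall>i. j < i \<and> i < k \<longrightarrow> s i = 0) \<Longrightarrow>
                 z k = z (Suc j) \<and> z (k+n) = z (Suc j + n)"
    proof -
      fix j k assume jk: "j < k" "Suc k \<le> n" and z0: "\<forall>i. j < i \<and> i < k \<longrightarrow> s i = 0"
      have "\<And>d. Suc j + d \<le> k \<Longrightarrow> z (Suc j + d) = z (Suc j) \<and> z (Suc j + d + n) = z (Suc j + n)"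
      proof -
        fix d show "Suc j + d \<le> k \<Longrightarrow> z (Suc j + d) = z (Suc j) \<and> z (Suc j + d + n) = z (Suc j + n)"
        proof (induction d)
          case 0 then show ?case by simp
        next
          case (Suc d)
          define i where "i = Suc j + d"
          have "s i = 0" using z0 Suc.prems unfolding i_def by auto
          moreover have "Suc i < n" using Suc.prems jk unfolding i_def by auto
          ultimately have "s' i = 0" using sync by blast
          then have "z (Suc i) = z i" "z (Suc i + n) = z (i + n)" using \<open>s i = 0\<close> unfolding s_def s'_def Z_def by simp_all
          moreover have "Suc j + Suc d = Suc i" unfolding i_def by simp
          ultimately show ?case using Suc unfolding i_def by simp
        qed
      qed
      note this[of "k - Suc j"]
      then show "z k = z (Suc j) \<and> z (k+n) = z (Suc j + n)" using jk by auto
    qed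
    have turn: "\<And>j k. j < k \<Longrightarrow> Suc k < n \<Longrightarrow> s j \<noteq> 0 \<Longrightarrow> s k \<noteq> 0 \<Longrightarrow>
                 (\<forall>i. j < i \<and> i < k \<longrightarrow> s i = 0) \<Longrightarrow> (s k = s j \<longleftrightarrow> s' k = s' j)"
    proof -
      fix j k assume jk: "j < k" "Suc k < n" and nz: "s j \<noteq> 0" "s k \<noteq> 0"
        and z0: "\<forall>i. j < i \<and> i < k \<longrightarrow> s i = 0"
      have fl: "z k = z (Suc j)" "z (k+n) = z (Suc j + n)" using flat[OF jk(1) _ z0] jk by auto
      have nz': "s' j \<noteq> 0" "s' k \<noteq> 0" using nz sync jk by auto
      have r: "s j \<in> {-1,1}" "s k \<in> {-1,1}" "s' j \<in> {-1,1}" "s' k \<in> {-1,1}"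
        using srange[of j] srange[of k] nz nz' jk by auto
      have cj: "T4 (z j) = T4 (z (j+n))" "T4 (z (Suc k)) = T4 (z (Suc k + n))" using col jk by auto
      have A: "s k = - s j \<Longrightarrow> s' k = - s' j"
      proof -
        assume "s k = - s j"
        then have "z (Suc k) = z j" using fl unfolding s_def Z_def by simp
        then have "T4 (z (Suc k + n)) = T4 (z (j+n))" using cj by simp
        moreover have "\<bar>Z (Suc k + n) - Z (j+n)\<bar> \<le> 2" using fl r unfolding s'_def Z_def by auto
        ultimately have "z (Suc k + n) = z (j + n)" using near by blast
        then show "s' k = - s' j" using fl unfolding s'_def Z_def by simp
      qed
      have B: "s' k = - s' j \<Longrightarrow> s k = - s j"
      proof -
        assume "s' k = - s' j"
        then have "z (Suc k + n) = z (j + n)" using fl unfolding s'_def Z_def by simp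
        then have "T4 (z (Suc k)) = T4 (z j)" using cj by simp
        moreover have "\<bar>Z (Suc k) - Z j\<bar> \<le> 2" using fl r unfolding s_def Z_def by auto
        ultimately have "z (Suc k) = z j" using near by blast
        then show "s k = - s j" using fl unfolding s_def Z_def by simp
      qed
      show "s k = s j \<longleftrightarrow> s' k = s' j" using A B r by auto
    qed
    obtain \<rho> :: int where rho: "\<rho> \<in> {-1,1}" "\<And>j. Suc j < n \<Longrightarrow> s' j = \<rho> * s j"
    proof (cases "\<exists>j. Suc j < n \<and> s j \<noteq> 0")
      case False
      then have "\<And>j. Suc j < n \<Longrightarrow> s' j = 1 * s j" using sync by auto
      then show ?thesis using that[of 1] by auto
    next
      case True
      define j1 where "j1 = (LEAST j. Suc j < n \<and> s j \<noteq> 0)"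
      have j1: "Suc j1 < n" "s j1 \<noteq> 0" using LeastI_ex[OF True] unfolding j1_def by auto
      have j1min: "\<And>j. j < j1 \<Longrightarrow> \<not>(Suc j < n \<and> s j \<noteq> 0)" using not_less_Least unfolding j1_def by blast
      define \<rho> where "\<rho> = s' j1 * s j1"
      have r1: "s j1 \<in> {-1,1}" "s' j1 \<in> {-1,1}" using srange[OF j1(1)] j1 sync[OF j1(1)] by auto
      have rr: "\<rho> \<in> {-1,1}" using r1 unfolding \<rho>_def by auto
      have main: "\<And>j. Suc j < n \<Longrightarrow> s j \<noteq> 0 \<Longrightarrow> s' j = \<rho> * s j"
      proof -
        fix j show "Suc j < n \<Longrightarrow> s j \<noteq> 0 \<Longrightarrow> s' j = \<rho> * s j"
        proof (induction j rule: less_induct)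
          case (less j)
          have "j1 \<le> j"
          proof (rule ccontr)
            assume "\<not> j1 \<le> j" then have "j < j1" by simp
            then show False using j1min[of j] less.prems by simp
          qed
          show ?case
          proof (cases "j = j1")
            case True then show ?thesis using r1 unfolding \<rho>_def by auto
          next
            case False
            then have "j1 < j" using \<open>j1 \<le> j\<close> by simp
            define S where "S = {i. i < j \<and> s i \<noteq> 0}"
            have fin: "finite S" unfolding S_def by simp
            have ne: "j1 \<in> S" unfolding S_def using \<open>j1 < j\<close> j1 by simp
            define k where "k = Max S"
            have "S \<noteq> {}" using ne by auto
            then have kS: "k \<in> S" unfolding k_def using Max_in[OF fin] by blast
            have kj: "k < j" "s k \<noteq> 0" using kS unfolding S_def by auto
            have kmax: "\<And>i. k < i \<and> i < j \<longrightarrow> s i = 0"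
            proof
              fix i assume "k < i \<and> i < j"
              show "s i = 0"
              proof (rule ccontr)
                assume "s i \<noteq> 0"
                then have "i \<in> S" using \<open>k < i \<and> i < j\<close> unfolding S_def by simp
                then have "i \<le> k" unfolding k_def using Max_ge[OF fin] by blast
                then show False using \<open>k < i \<and> i < j\<close> by simp
              qed
            qed
            have ih: "s' k = \<rho> * s k" using less.IH[OF kj(1)] kj less.prems by simp
            have tk: "s j = s k \<longleftrightarrow> s' j = s' k" using turn[OF kj(1) less.prems(1) kj(2) less.prems(2)] kmax by blast
            have rj: "s j \<in> {-1,1}" "s k \<in> {-1,1}" "s' j \<in> {-1,1}" "s' k \<in> {-1,1}"
              using srange[of j] srange[of k] less.prems kj sync[of j] sync[of k] by auto
            show ?thesis using tk ih rj rr by auto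
          qed
        qed
      qed
      have "\<And>j. Suc j < n \<Longrightarrow> s' j = \<rho> * s j"
      proof -
        fix j assume "Suc j < n"
        then show "s' j = \<rho> * s j" using main[of j] sync[of j] by (cases "s j = 0") auto
      qed
      then show ?thesis using that rr by blast
    qed
    have tele: "\<And>j. j < n \<Longrightarrow> Z (j+n) - Z n = \<rho> * (Z j - Z 0)"
    proof -
      fix j show "j < n \<Longrightarrow> Z (j+n) - Z n = \<rho> * (Z j - Z 0)"
      proof (induction j)
        case 0 then show ?case by simp
      next
        case (Suc j)
        then have "s' j = \<rho> * s j" using rho by simp
        then show ?case using Suc unfolding s_def s'_def by (simp add: algebra_simps)
      qed
    qed
    have nm1: "n - 1 < n" "Suc (n-1) = n" using n0 by auto
    have lastl: "\<bar>Z n - Z (n-1)\<bar> \<le> 1" using lz[of "n-1"] nm1 n0 by auto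
    have ivt1: "\<And>y. min (Z 0) (Z (n-1)) \<le> y \<Longrightarrow> y \<le> max (Z 0) (Z (n-1)) \<Longrightarrow> \<exists>j<n. Z j = y"
    proof -
      fix y assume "min (Z 0) (Z (n-1)) \<le> y" "y \<le> max (Z 0) (Z (n-1))"
      then obtain j where "j \<le> n-1" "Z j = y" using ivt[of "n-1" Z y] lz n0 by force
      then show "\<exists>j<n. Z j = y" using n0 by (intro exI[of _ j]) auto
    qed
    show ?thesis
    proof (cases "\<rho> = 1")
      case True
      define c where "c = Z n - Z 0"
      have tr: "\<And>j. j < n \<Longrightarrow> Z (j+n) = Z j + c"
      proof -
        fix j assume "j < n"
        then have "Z (j+n) - Z n = Z j - Z 0" using tele[of j] True by simp
        then show "Z (j+n) = Z j + c" unfolding c_def by simp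
      qed
      have cne: "c \<noteq> 0" using zne unfolding c_def Z_def by simp
      show ?thesis
      proof (cases "c > 0")
        case True
        define q where "q = nat c"
        have "\<forall>r<q. T4 (z 0 + r) = T4 (z 0 + q + r)"
        proof (intro allI impI)
          fix r assume r: "r < q"
          have "Z 0 + int r \<le> Z (n-1)" using lastl r True unfolding c_def q_def by linarith
          then obtain j where j: "j < n" "Z j = Z 0 + int r" using ivt1[of "Z 0 + int r"] by auto
          then have "z j = z 0 + r" unfolding Z_def by simp
          moreover have "z (j+n) = z 0 + q + r" using tr[OF j(1)] j True unfolding Z_def q_def by simp
          ultimately show "T4 (z 0 + r) = T4 (z 0 + q + r)" using col[OF j(1)] by simp
        qed
        moreover have "q > 0" using True unfolding q_def by simp
        ultimately show ?thesis using T4_sqfree[of q "z 0"] by blast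
      next
        case False
        define q where "q = nat (-c)"
        have qc: "int q = - c" "q > 0" using False cne unfolding q_def by auto
        have lo: "Z (n-1) \<le> Z 0 - int q + 1" using lastl qc unfolding c_def by linarith
        have key: "\<And>r. r < q \<Longrightarrow> \<exists>j<n. Z j = Z 0 - int r"
        proof -
          fix r assume "r < q"
          then have "min (Z 0) (Z (n-1)) \<le> Z 0 - int r" "Z 0 - int r \<le> max (Z 0) (Z (n-1))" using lo by auto
          then show "\<exists>j<n. Z j = Z 0 - int r" using ivt1 by blast
        qed
        obtain j0 where j0: "j0 < n" "Z j0 = Z 0 - int (q - 1)" using key[of "q-1"] qc by auto
        have pos: "Z 0 - int (q-1) - int q \<ge> 0" using tr[OF j0(1)] j0 qc unfolding Z_def by simp
        define a where "a = nat (Z 0 + 1 - 2 * int q)"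
        have ai: "int a = Z 0 + 1 - 2 * int q" unfolding a_def using pos qc by simp
        have "\<forall>k<q. T4 (a + k) = T4 (a + q + k)"
        proof (intro allI impI)
          fix k assume k: "k < q"
          obtain j where j: "j < n" "Z j = Z 0 - int (q - 1 - k)" using key[of "q-1-k"] k by auto
          have "int (z j) = int (a + q + k)" using j ai k qc unfolding Z_def by simp
          then have e1: "z j = a + q + k" by (simp only: of_nat_eq_iff)
          have "int (z (j+n)) = int (a + k)" using tr[OF j(1)] j ai k qc unfolding Z_def by simp
          then have e2: "z (j+n) = a + k" by (simp only: of_nat_eq_iff)
          show "T4 (a + k) = T4 (a + q + k)" using col[OF j(1)] unfolding e1 e2 by simp
        qed
        then show ?thesis using T4_sqfree[of q a] qc by blast
      qed
    next
      case False
      then have rm: "\<rho> = -1" using rho by auto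
      define e where "e = Z n + Z 0"
      have rf: "\<And>j. j < n \<Longrightarrow> Z (j+n) = e - Z j"
      proof -
        fix j assume "j < n"
        then have "Z (j+n) - Z n = - (Z j - Z 0)" using tele[of j] rm by simp
        then show "Z (j+n) = e - Z j" unfolding e_def by simp
      qed
      define A where "A = Z 0"
      define B where "B = Z (n-1)"
      have AB: "A + B \<le> e + 1" "e - 1 \<le> A + B" using lastl unfolding A_def B_def e_def by auto
      have eA: "e \<noteq> 2 * A" using zne unfolding e_def A_def Z_def by simp
      have "\<exists>y. min A B \<le> y \<and> y \<le> max A B \<and> (2*y - e \<in> {-2,-1,1,2})"
      proof (cases "A = B")
        case True then show ?thesis using AB eA by (intro exI[of _ A]) auto
      next
        case False
        define lo where "lo = min A B"
        define hi where "hi = max A B"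
        have lh: "lo < hi" "lo + hi = A + B" using False unfolding lo_def hi_def by auto
        show ?thesis
        proof (cases "2 * lo = e")
          case True
          then show ?thesis using lh unfolding lo_def[symmetric] hi_def[symmetric]
            by (intro exI[of _ "lo+1"]) auto
        next
          case False
          define y where "y = (e - 1) div 2"
          have y2: "2*y = e - 1 \<or> 2*y = e - 2" unfolding y_def by presburger
          have "lo \<le> y" using y2 lh AB False by linarith
          moreover have "y \<le> hi" using y2 lh AB by linarith
          ultimately show ?thesis using y2 unfolding lo_def[symmetric] hi_def[symmetric]
            by (intro exI[of _ y]) auto
        qed
      qed
      then obtain y where y: "min A B \<le> y" "y \<le> max A B" "2*y - e \<in> {-2,-1,1,2}" by blast
      obtain j where j: "j < n" "Z j = y" using ivt1[of y] y unfolding A_def B_def by blast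
      have "T4 (z j) = T4 (z (j+n))" using col j by simp
      moreover have "\<bar>Z j - Z (j+n)\<bar> \<le> 2" using rf[OF j(1)] j y by auto
      ultimately have "z j = z (j+n)" using near by blast
      then have "Z j = e - Z j" using rf[OF j(1)] unfolding Z_def by simp
      then show ?thesis using j y by auto
    qed
  qed
qed

definition col :: "vtx \<Rightarrow> (bool \<times> bool) \<times> int" where
  "col v = (T4 (lvl v), D (idx v))"

lemma good_sqfree: assumes g: "goodw w" shows "square_free (\<lambda>i. col (w i))"
  unfolding square_free_def
proof
  assume "\<exists>i n. 0 < n \<and> (\<forall>j<n. col (w (i + int j)) = col (w (i + int n + int j)))"
  then obtain i n where n0: "n > 0" and eqc: "\<And>j. j < n \<Longrightarrow> col (w (i + int j)) = col (w (i + int n + int j))" by blast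
  have G1: "\<And>i. lvl (w (i+1)) \<le> lvl (w i) + 1 \<and> lvl (w i) \<le> lvl (w (i+1)) + 1" using g unfolding goodw_def by blast
  have G2: "\<And>i j. i < j \<Longrightarrow> lvl (w i) = lvl (w j) \<Longrightarrow> (\<forall>k. i < k \<and> k < j \<longrightarrow> lvl (w i) < lvl (w k))
        \<Longrightarrow> idx (w j) = idx (w i) + 1" using g unfolding goodw_def by blast
  define z where "z j = lvl (w (i + int j))" for j
  define I where "I j = idx (w (i + int j))" for j
  have shift: "\<And>j. i + int n + int j = i + int (j + n)" by simp
  have lazy: "\<And>j. Suc j < 2*n \<Longrightarrow> z (Suc j) \<le> z j + 1 \<and> z j \<le> z (Suc j) + 1"
  proof -
    fix j
    have e: "w (i + int (Suc j)) = w ((i + int j) + 1)" by (simp add: algebra_simps)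
    show "z (Suc j) \<le> z j + 1 \<and> z j \<le> z (Suc j) + 1" unfolding z_def e by (rule G1)
  qed
  have colT: "\<And>j. j < n \<Longrightarrow> T4 (z j) = T4 (z (j+n))"
    using eqc unfolding col_def z_def shift by simp
  have colD: "\<And>j. j < n \<Longrightarrow> D (I j) = D (I (j+n))"
    using eqc unfolding col_def I_def shift by simp
  have zz: "\<forall>j<n. z j = z (j+n)" by (rule walk[OF n0 lazy colT])
  define m where "m = Min (z ` {..<n})"
  define L where "L = {j. j < n \<and> z j = m}"
  have finL: "finite L" unfolding L_def by simp
  have mz: "\<And>j. j < 2*n \<Longrightarrow> m \<le> z j"
  proof -
    fix j assume j: "j < 2*n"
    show "m \<le> z j"
    proof (cases "j < n")
      case True then show ?thesis unfolding m_def by simp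
    next
      case False
      then have "z j = z (j - n)" using zz[rule_format, of "j-n"] j by simp
      moreover have "j - n < n" using j False by simp
      ultimately show ?thesis unfolding m_def by simp
    qed
  qed
  have Lne: "L \<noteq> {}"
  proof -
    have "m \<in> z ` {..<n}" unfolding m_def using n0 by (intro Min_in) auto
    then show ?thesis unfolding L_def by auto
  qed
  define f where "f y = card {k. k < y \<and> z k = m}" for y
  have C: "\<And>y2 y1. y2 < 2*n \<Longrightarrow> y1 < y2 \<Longrightarrow> z y1 = m \<Longrightarrow> z y2 = m \<Longrightarrow> I y2 - I y1 = int (f y2) - int (f y1)"
  proof -
    fix y2 show "\<And>y1. y2 < 2*n \<Longrightarrow> y1 < y2 \<Longrightarrow> z y1 = m \<Longrightarrow> z y2 = m \<Longrightarrow> I y2 - I y1 = int (f y2) - int (f y1)"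
    proof (induction y2 rule: less_induct)
      case (less y2 y1)
      define S where "S = {k. y1 \<le> k \<and> k < y2 \<and> z k = m}"
      have finS: "finite S" unfolding S_def by simp
      have y1S: "y1 \<in> S" unfolding S_def using less.prems by simp
      define k0 where "k0 = Max S"
      have k0S: "k0 \<in> S" unfolding k0_def using Max_in[OF finS] y1S by blast
      have k0: "y1 \<le> k0" "k0 < y2" "z k0 = m" using k0S unfolding S_def by auto
      have btw: "\<And>t. k0 < t \<Longrightarrow> t < y2 \<Longrightarrow> m < z t"
      proof -
        fix t assume t: "k0 < t" "t < y2"
        have "m \<le> z t" using mz[of t] t less.prems by simp
        moreover have "z t \<noteq> m"
        proof
          assume "z t = m"
          then have "t \<in> S" unfolding S_def using t k0 by simp
          then have "t \<le> k0" unfolding k0_def using Max_ge[OF finS] by blast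
          then show False using t by simp
        qed
        ultimately show "m < z t" by simp
      qed
      have step: "I y2 = I k0 + 1"
      proof -
        have "idx (w (i + int y2)) = idx (w (i + int k0)) + 1"
        proof (rule G2)
          show "i + int k0 < i + int y2" using k0 by simp
          show "lvl (w (i + int k0)) = lvl (w (i + int y2))" using k0 less.prems unfolding z_def by simp
          show "\<forall>k. i + int k0 < k \<and> k < i + int y2 \<longrightarrow> lvl (w (i + int k0)) < lvl (w k)"
          proof (intro allI impI)
            fix k assume k: "i + int k0 < k \<and> k < i + int y2"
            define t where "t = nat (k - i)"
            have kt: "k = i + int t" "k0 < t" "t < y2" using k unfolding t_def by auto
            then show "lvl (w (i + int k0)) < lvl (w k)" using btw[of t] k0 unfolding z_def by simp
          qed
        qed
        then show ?thesis unfolding I_def .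
      qed
      have fstep: "f y2 = f k0 + 1"
      proof -
        have "{k. k < y2 \<and> z k = m} = insert k0 {k. k < k0 \<and> z k = m}"
        proof (intro set_eqI iffI)
          fix k assume "k \<in> {k. k < y2 \<and> z k = m}"
          then have "k < y2" "z k = m" by auto
          then show "k \<in> insert k0 {k. k < k0 \<and> z k = m}" using btw[of k] by (cases "k0 < k") auto
        next
          fix k assume "k \<in> insert k0 {k. k < k0 \<and> z k = m}"
          then show "k \<in> {k. k < y2 \<and> z k = m}" using k0 by auto
        qed
        then show ?thesis unfolding f_def by simp
      qed
      show ?case
      proof (cases "k0 = y1")
        case True then show ?thesis using step fstep by simp
      next
        case False
        then have "y1 < k0" using k0 by simp
        then have "I k0 - I y1 = int (f k0) - int (f y1)" using less.IH[OF k0(2)] k0 less.prems by simp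
        then show ?thesis using step fstep by simp
      qed
    qed
  qed
  have P: "\<And>y. y < n \<Longrightarrow> f (y+n) = f n + f y"
  proof -
    fix y assume y: "y < n"
    have "{k. k < y+n \<and> z k = m} = {k. k < n \<and> z k = m} \<union> (\<lambda>k. k+n) ` {k. k < y \<and> z k = m}"
    proof (intro set_eqI iffI)
      fix k assume k: "k \<in> {k. k < y+n \<and> z k = m}"
      show "k \<in> {k. k < n \<and> z k = m} \<union> (\<lambda>k. k+n) ` {k. k < y \<and> z k = m}"
      proof (cases "k < n")
        case True then show ?thesis using k by simp
      next
        case False
        have "k - n < n" using k y False by auto
        then have "z (k - n) = z k" using zz[rule_format, of "k-n"] False by simp
        then have "k - n \<in> {k. k < y \<and> z k = m}" using k False by auto
        moreover have "k = (k - n) + n" using False by simp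
        ultimately show ?thesis by blast
      qed
    next
      fix k assume "k \<in> {k. k < n \<and> z k = m} \<union> (\<lambda>k. k+n) ` {k. k < y \<and> z k = m}"
      then show "k \<in> {k. k < y+n \<and> z k = m}"
      proof
        assume "k \<in> {k. k < n \<and> z k = m}" then show ?thesis by simp
      next
        assume "k \<in> (\<lambda>k. k+n) ` {k. k < y \<and> z k = m}"
        then obtain k' where "k = k' + n" "k' < y" "z k' = m" by auto
        then show ?thesis using zz[rule_format, of k'] y by simp
      qed
    qed
    moreover have "{k. k < n \<and> z k = m} \<inter> (\<lambda>k. k+n) ` {k. k < y \<and> z k = m} = {}" by auto
    moreover have "card ((\<lambda>k. k+n) ` {k. k < y \<and> z k = m}) = f y"
      unfolding f_def by (rule card_image) (simp add: inj_on_def)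
    ultimately show "f (y+n) = f n + f y" unfolding f_def by (simp add: card_Un_disjoint)
  qed
  define s where "s = card L"
  have fn: "f n = s" unfolding f_def s_def L_def by simp
  have s0: "s > 0" unfolding s_def using finL Lne by (simp add: card_gt_0_iff)
  define y0 where "y0 = Min L"
  have y0L: "y0 \<in> L" unfolding y0_def using Min_in[OF finL Lne] .
  have y0min: "\<And>y. y \<in> L \<Longrightarrow> y0 \<le> y" unfolding y0_def using Min_le[OF finL] by blast
  have fy0: "f y0 = 0"
  proof -
    have "{k. k < y0 \<and> z k = m} = {}"
    proof (rule ccontr)
      assume "{k. k < y0 \<and> z k = m} \<noteq> {}"
      then obtain k where "k < y0" "z k = m" by auto
      moreover have "y0 < n" using y0L unfolding L_def by simp
      ultimately have "k \<in> L" unfolding L_def by simp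
      then show False using y0min \<open>k < y0\<close> by fastforce
    qed
    then show ?thesis unfolding f_def by simp
  qed
  define a where "a = I y0"
  have IL: "\<And>y. y \<in> L \<Longrightarrow> I y = a + int (f y)"
  proof -
    fix y assume yL: "y \<in> L"
    show "I y = a + int (f y)"
    proof (cases "y = y0")
      case True then show ?thesis unfolding a_def using fy0 by simp
    next
      case False
      then have "y0 < y" using y0min[OF yL] by simp
      moreover have "y < 2*n" "z y = m" "z y0 = m" using yL y0L unfolding L_def by auto
      ultimately show ?thesis using C[of y y0] fy0 unfolding a_def by simp
    qed
  qed
  have ILn: "\<And>y. y \<in> L \<Longrightarrow> I (y+n) = I y + int s"
  proof -
    fix y assume yL: "y \<in> L"
    then have y: "y < n" "z y = m" unfolding L_def by auto
    have "I (y+n) - I y = int (f (y+n)) - int (f y)"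
      using C[of "y+n" y] y n0 zz by simp
    then show "I (y+n) = I y + int s" using P[OF y(1)] fn by simp
  qed
  have fbound: "\<And>y. y \<in> L \<Longrightarrow> f y < s"
  proof -
    fix y assume yL: "y \<in> L"
    have "{k. k < y \<and> z k = m} \<subset> L" using yL unfolding L_def by auto
    then show "f y < s" unfolding f_def s_def by (rule psubset_card_mono[OF finL])
  qed
  have finj: "inj_on f L"
  proof (rule inj_onI)
    fix y y' assume yy: "y \<in> L" "y' \<in> L" "f y = f y'"
    show "y = y'"
    proof (rule ccontr)
      assume ne: "y \<noteq> y'"
      { fix u u' assume uu: "u \<in> L" "u' \<in> L" "u < u'"
        have "{k. k < u \<and> z k = m} \<subset> {k. k < u' \<and> z k = m}" using uu unfolding L_def by auto
        then have "f u < f u'" unfolding f_def by (rule psubset_card_mono[rotated]) simp }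
      note mono = this
      show False using ne yy mono[of y y'] mono[of y' y] by (cases "y < y'") auto
    qed
  qed
  have img: "f ` L = {..<s}"
  proof (rule card_subset_eq)
    show "finite {..<s}" by simp
    show "f ` L \<subseteq> {..<s}" using fbound by auto
    show "card (f ` L) = card {..<s}" using card_image[OF finj] unfolding s_def by simp
  qed
  have "\<forall>r<s. D (a + int r) = D (a + int s + int r)"
  proof (intro allI impI)
    fix r assume "r < s"
    then have "r \<in> f ` L" using img by simp
    then obtain y where yL: "y \<in> L" and fy: "f y = r" by auto
    have "y < n" using yL unfolding L_def by simp
    then have "D (I y) = D (I (y+n))" using colD by simp
    then show "D (a + int r) = D (a + int s + int r)" using IL[OF yL] ILn[OF yL] fy by (simp add: algebra_simps)
  qed
  then show False using D_sqfree[of s a] s0 by blast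
qed

lemma extend_comp: "extend (\<lambda>i. f (w i)) p (f v) = (\<lambda>i. f (extend w p v i))"
  unfolding extend_def by (rule ext) simp

lemma sqfree_inj:
  assumes "square_free (\<lambda>i. g (w i))" "inj_on h S" "\<And>i. g (w i) \<in> S"
  shows "square_free (\<lambda>i. h (g (w i)))"
  using assms unfolding square_free_def inj_on_def by metis

theorem mainTheorem6:
  fixes A :: "'a set"
  assumes "finite A" and "card A = 12"
  shows "\<exists>T. complete_bifurcate_tree A T"
proof -
  define Dom where "Dom = (UNIV :: (bool \<times> bool) set) \<times> {-1, 0, 1::int}"
  have U: "(UNIV :: (bool \<times> bool) set) = {(False,False),(False,True),(True,False),(True,True)}" by auto
  have cU: "card (UNIV :: (bool \<times> bool) set) = 4" unfolding U by simp
  have c3: "card {-1, 0, 1::int} = 3" by simp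
  have cD: "card Dom = 12" unfolding Dom_def card_cartesian_product cU c3 by simp
  have fD: "finite Dom" unfolding Dom_def by simp
  obtain enc where bij: "bij_betw enc Dom A"
    using finite_same_card_bij[OF fD assms(1)] cD assms(2) by auto
  have inj: "inj_on enc Dom" using bij by (rule bij_betw_imp_inj_on)
  have encA: "\<And>d. d \<in> Dom \<Longrightarrow> enc d \<in> A" using bij by (auto simp: bij_betw_def)
  have colD: "\<And>v. col v \<in> Dom" unfolding Dom_def col_def using D_range by simp
  define Tr where "Tr ps = (\<lambda>i. enc (col (W ps i)))" for ps
  have sqf: "\<And>ps. square_free (Tr ps)"
  proof -
    fix ps
    have "square_free (\<lambda>i. col (W ps i))" by (rule good_sqfree[OF good_W])
    from sqfree_inj[of col "W ps" enc Dom, OF this inj colD]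
    show "square_free (Tr ps)" unfolding Tr_def .
  qed
  have child: "\<And>ps p. Tr (p # ps) = extend (Tr ps) p (enc (col (Ear (W ps p) (W ps (p+1)))))"
    unfolding Tr_def by (simp add: extend_comp[of "\<lambda>v. enc (col v)"])
  have xA: "\<And>ps p. enc (col (Ear (W ps p) (W ps (p+1)))) \<in> A" using encA colD by blast
  have "complete_bifurcate_tree A Tr"
    unfolding complete_bifurcate_tree_def
  proof (intro conjI allI)
    fix ps
    show "bifurcate A (Tr ps)"
      unfolding bifurcate_def
    proof (intro conjI allI)
      show "word_over A (Tr ps)" unfolding word_over_def Tr_def using encA colD by blast
      show "square_free (Tr ps)" by (rule sqf)
      fix k
      show "\<exists>x\<in>A. square_free (extend (Tr ps) k x)"
        using xA[of ps k] sqf[of "k # ps"] child[of k ps] by auto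
    qed
  next
    fix ps p
    show "\<exists>x\<in>A. Tr (p # ps) = extend (Tr ps) p x" using xA child by blast
  qed
  then show ?thesis by blast
qed

end
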